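(* Let $X$ be a finite set and let $c$ be a choice correspondence on $X$. Then $c$ admits a minimal compromise representation if and only if $c$ satisfies the following five conditions: Condition 1: for all $x,y\in X$ and menus $A\subset B$, if $x,y\in A$, $x\in c(A)$ and $y\in c(B)$, then $x\in c(B)$. Condition 2: for all $x,y\in X$ and menus $A\subset B$, if $x,y\in A$, $x\in r^{c}(A)$ and $y\in r^{c}(B)$, then $x\in r^{c}(B)$. Condition 3: for every menu $A$ with at least two elements there exists $x\in A$ with $x\notin c(A)$. Condition 4: for every menu $A$ and all $x,y\in X$, if $x\in A\setminus c(A)$ and $x\in c(A\cup\{y\})$, then $y\notin c(A\cup\{y\})$. Condition 5: for every menu $A$ and every menu $B\subseteq r^{c}(A)$ with at least two elements, there exists $x\in B$ with $x\notin c(B)$ such that $B=c(B)\cup\{x\}$.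
   Context: A menu is a nonempty subset of $X$. A choice correspondence is a map $c$ assigning to each menu $A$ a nonempty subset $c(A)\subseteq A$. A weak order is a complete and transitive binary relation on $X$; a linear order is an antisymmetric weak order. For a weak order $R$ and menu $A$, $\max(A,R)=\{x\in A: xRy \text{ for all } y\in A\}$. For a linear order $L$, $\min(A,L)$ denotes the unique $x\in A$ with $yLx$ for all $y\in A$. A choice correspondence $c$ admits a minimal compromise representation if there exist a weak order $R$ and a linear order $L$ on $X$ such that for every menu $A$: $c(A)=\max(A,R)$ if $\max(A,R)$ is a singleton, and $c(A)=\max(A,R)\setminus\{\min(\max(A,R),L)\}$ otherwise. For a choice correspondence $c$ and menu $A$, $r^{c}(A)=\{x\in A: c(A\setminus\{x\})\neq c(A)\}$, the set of alternatives whose removal changes the choice (with the convention that for a singleton $A=\{x\}$ the removal of $x$ counts as changing the choice, so $r^c(\{x\})=\{x\}$; in particular $c(A)\subseteq r^c(A)$ always). *)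

theory Defs
  imports Main
begin

definition menu :: "'a set \<Rightarrow> 'a set \<Rightarrow> bool" where
  "menu X A \<longleftrightarrow> A \<subseteq> X \<and> A \<noteq> {}"

definition choice_corr :: "'a set \<Rightarrow> ('a set \<Rightarrow> 'a set) \<Rightarrow> bool" where
  "choice_corr X c \<longleftrightarrow> (\<forall>A. menu X A \<longrightarrow> c A \<subseteq> A \<and> c A \<noteq> {})"

definition weak_order_on :: "'a set \<Rightarrow> 'a rel \<Rightarrow> bool" where
  "weak_order_on X R \<longleftrightarrow> preorder_on X R \<and> total_on X R"

definition lin_order_on :: "'a set \<Rightarrow> 'a rel \<Rightarrow> bool" where
  "lin_order_on X L \<longleftrightarrow> weak_order_on X L \<and> antisym L"

definition maxR :: "'a set \<Rightarrow> 'a rel \<Rightarrow> 'a set" where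
  "maxR A R = {x \<in> A. \<forall>y \<in> A. (x, y) \<in> R}"

definition minL :: "'a set \<Rightarrow> 'a rel \<Rightarrow> 'a" where
  "minL A L = (THE x. x \<in> A \<and> (\<forall>y \<in> A. (y, x) \<in> L))"

definition min_compromise_rep :: "'a set \<Rightarrow> ('a set \<Rightarrow> 'a set) \<Rightarrow> bool" where
  "min_compromise_rep X c \<longleftrightarrow>
     (\<exists>R L. weak_order_on X R \<and> lin_order_on X L \<and>
        (\<forall>A. menu X A \<longrightarrow>
           c A = (if (\<exists>x. maxR A R = {x}) then maxR A R
                  else maxR A R - {minL (maxR A R) L})))"

(* r^c(A); for a singleton menu the removal counts as changing the choice *)
definition rc :: "('a set \<Rightarrow> 'a set) \<Rightarrow> 'a set \<Rightarrow> 'a set" where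
  "rc c A = {x \<in> A. A - {x} = {} \<or> c (A - {x}) \<noteq> c A}"

end

theory Submission
  imports Defs
begin

lemma exists_top:
  assumes "finite S" "S \<noteq> {}" "S \<subseteq> Y"
    and refl: "\<And>x. x \<in> Y \<Longrightarrow> (x,x) \<in> Q"
    and tot: "\<And>x y. x \<in> Y \<Longrightarrow> y \<in> Y \<Longrightarrow> (x,y) \<in> Q \<or> (y,x) \<in> Q"
    and tr: "\<And>x y z. (x,y) \<in> Q \<Longrightarrow> (y,z) \<in> Q \<Longrightarrow> (x,z) \<in> Q"
  shows "\<exists>x\<in>S. \<forall>y\<in>S. (x,y) \<in> Q"
  using assms(1,2,3)
proof (induction S rule: finite_ne_induct)
  case (singleton x)
  then show ?case using refl by auto
next
  case (insert x F)
  then obtain m where m: "m \<in> F" "\<forall>y\<in>F. (m,y) \<in> Q" by auto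
  show ?case
  proof (cases "(m,x) \<in> Q")
    case True
    then show ?thesis using m by auto
  next
    case False
    then have "(x,m) \<in> Q" using tot insert m by blast
    then have "\<forall>y\<in>insert x F. (x,y) \<in> Q" using m tr refl insert by blast
    then show ?thesis by auto
  qed
qed

lemma rc_sub: "rc c A \<subseteq> A" by (auto simp: rc_def)

lemma c_sub_rc:
  assumes "choice_corr X c" "menu X A"
  shows "c A \<subseteq> rc c A"
proof
  fix x assume x: "x \<in> c A"
  have xA: "x \<in> A" using assms x by (auto simp: choice_corr_def)
  show "x \<in> rc c A"
  proof (cases "A - {x} = {}")
    case True then show ?thesis using xA by (auto simp: rc_def)
  next
    case False
    then have "menu X (A - {x})" using assms(2) by (auto simp: menu_def)
    then have "c (A - {x}) \<subseteq> A - {x}" using assms(1) by (auto simp: choice_corr_def)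
    then have "c (A - {x}) \<noteq> c A" using x by auto
    then show ?thesis using xA by (auto simp: rc_def)
  qed
qed

section \<open>Necessity\<close>

locale rep_ctx =
  fixes X :: "'a set" and c :: "'a set \<Rightarrow> 'a set" and R L :: "'a rel"
  assumes fin: "finite X" and cc: "choice_corr X c"
    and wR: "weak_order_on X R" and wL: "lin_order_on X L"
    and rep: "\<And>A. menu X A \<Longrightarrow> c A = (if (\<exists>x. maxR A R = {x}) then maxR A R
                  else maxR A R - {minL (maxR A R) L})"
begin

lemma R_sub: "R \<subseteq> X \<times> X" using wR by (auto simp: weak_order_on_def preorder_on_def)
lemma R_refl: "x \<in> X \<Longrightarrow> (x,x) \<in> R" using wR by (auto simp: weak_order_on_def preorder_on_def refl_on_def)
lemma R_tot: "x \<in> X \<Longrightarrow> y \<in> X \<Longrightarrow> (x,y) \<in> R \<or> (y,x) \<in> R"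
  using wR R_refl by (cases "x = y") (auto simp: weak_order_on_def total_on_def)
lemma R_trans: "(x,y) \<in> R \<Longrightarrow> (y,z) \<in> R \<Longrightarrow> (x,z) \<in> R"
  using wR by (auto simp: weak_order_on_def preorder_on_def dest: transD)

lemma L_refl: "x \<in> X \<Longrightarrow> (x,x) \<in> L" using wL by (auto simp: lin_order_on_def weak_order_on_def preorder_on_def refl_on_def)
lemma L_tot: "x \<in> X \<Longrightarrow> y \<in> X \<Longrightarrow> (x,y) \<in> L \<or> (y,x) \<in> L"
  using wL L_refl by (cases "x = y") (auto simp: lin_order_on_def weak_order_on_def total_on_def)
lemma L_trans: "(x,y) \<in> L \<Longrightarrow> (y,z) \<in> L \<Longrightarrow> (x,z) \<in> L"
  using wL by (auto simp: lin_order_on_def weak_order_on_def preorder_on_def dest: transD)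
lemma L_anti: "(x,y) \<in> L \<Longrightarrow> (y,x) \<in> L \<Longrightarrow> x = y"
  using wL by (auto simp: lin_order_on_def dest: antisymD)

lemma maxR_sub: "maxR A R \<subseteq> A" by (auto simp: maxR_def)

lemma maxR_ne: assumes "menu X A" shows "maxR A R \<noteq> {}"
proof -
  have "finite A" "A \<noteq> {}" "A \<subseteq> X" using assms fin by (auto simp: menu_def intro: finite_subset)
  then have "\<exists>x\<in>A. \<forall>y\<in>A. (x,y) \<in> R"
    by (rule exists_top[where Y=X, OF _ _ _ R_refl R_tot R_trans])
  then show ?thesis by (auto simp: maxR_def)
qed

lemma maxR_pair: "x \<in> maxR A R \<Longrightarrow> y \<in> maxR A R \<Longrightarrow> (x,y) \<in> R"
  by (auto simp: maxR_def)

lemma maxR_restrict: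
  assumes "A \<subseteq> B" "y \<in> A" "y \<in> maxR B R"
  shows "maxR A R = maxR B R \<inter> A"
proof
  show "maxR A R \<subseteq> maxR B R \<inter> A"
  proof
    fix z assume z: "z \<in> maxR A R"
    then have "(z,y) \<in> R" "z \<in> A" using assms by (auto simp: maxR_def)
    moreover have "\<forall>w\<in>B. (y,w) \<in> R" using assms by (auto simp: maxR_def)
    ultimately have "\<forall>w\<in>B. (z,w) \<in> R" using R_trans by blast
    then show "z \<in> maxR B R \<inter> A" using \<open>z \<in> A\<close> assms by (auto simp: maxR_def)
  qed
  show "maxR B R \<inter> A \<subseteq> maxR A R" using assms by (auto simp: maxR_def)
qed

lemma minL_prop:
  assumes "finite S" "S \<noteq> {}" "S \<subseteq> X"
  shows "minL S L \<in> S \<and> (\<forall>y\<in>S. (y, minL S L) \<in> L)"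
proof -
  have "\<exists>x\<in>S. \<forall>y\<in>S. (x,y) \<in> L\<inverse>"
  proof (rule exists_top[where Y=X, OF assms])
    show "\<And>x. x \<in> X \<Longrightarrow> (x, x) \<in> L\<inverse>" using L_refl by simp
    show "\<And>x y. x \<in> X \<Longrightarrow> y \<in> X \<Longrightarrow> (x, y) \<in> L\<inverse> \<or> (y, x) \<in> L\<inverse>"
      using L_tot by simp
    show "\<And>x y z. (x, y) \<in> L\<inverse> \<Longrightarrow> (y, z) \<in> L\<inverse> \<Longrightarrow> (x, z) \<in> L\<inverse>"
      using L_trans by simp
  qed
  then obtain x where x: "x \<in> S" "\<forall>y\<in>S. (y,x) \<in> L" by auto
  have "minL S L = x" unfolding minL_def
    by (rule the_equality) (use x L_anti in auto)
  then show ?thesis using x by auto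
qed

lemma minL_eq:
  assumes "x \<in> S" "\<forall>y\<in>S. (y,x) \<in> L"
  shows "minL S L = x"
  unfolding minL_def by (rule the_equality) (use assms L_anti in auto)

lemma M_fin: "menu X A \<Longrightarrow> finite (maxR A R)"
proof -
  assume "menu X A"
  then have "maxR A R \<subseteq> X" using maxR_sub[of A] by (auto simp: menu_def)
  then show ?thesis using fin finite_subset by blast
qed

lemma M_X: "menu X A \<Longrightarrow> maxR A R \<subseteq> X"
  using maxR_sub by (auto simp: menu_def)

lemma minLM: "menu X A \<Longrightarrow> minL (maxR A R) L \<in> maxR A R \<and> (\<forall>y\<in>maxR A R. (y, minL (maxR A R) L) \<in> L)"
  by (rule minL_prop[OF M_fin maxR_ne M_X])

lemma c_single: "menu X A \<Longrightarrow> maxR A R = {x} \<Longrightarrow> c A = {x}"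
  using rep[of A] by simp

lemma c_multi: "menu X A \<Longrightarrow> \<not>(\<exists>x. maxR A R = {x}) \<Longrightarrow> c A = maxR A R - {minL (maxR A R) L}"
  using rep[of A] by simp

lemma c_sub_M: "menu X A \<Longrightarrow> c A \<subseteq> maxR A R"
  using rep[of A] by (auto split: if_splits)

lemma card_ge2: "menu X A \<Longrightarrow> \<not>(\<exists>x. maxR A R = {x}) \<Longrightarrow> 2 \<le> card (maxR A R)"
proof -
  assume a: "menu X A" "\<not>(\<exists>x. maxR A R = {x})"
  have "maxR A R \<noteq> {}" "finite (maxR A R)" using maxR_ne[OF a(1)] M_fin[OF a(1)] by auto
  moreover have "card (maxR A R) \<noteq> 1" using a(2) by (simp add: card_1_singleton_iff)
  moreover have "card (maxR A R) \<noteq> 0" using calculation by simp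
  ultimately show ?thesis by linarith
qed

lemma notc_in_M:
  assumes "menu X A" "x \<in> maxR A R" "x \<notin> c A"
  shows "x = minL (maxR A R) L \<and> \<not>(\<exists>z. maxR A R = {z})"
  using assms rep[of A] by (auto split: if_splits)

lemma remove_notM:
  assumes "menu X A" "x \<in> A" "x \<notin> maxR A R"
  shows "menu X (A - {x}) \<and> maxR (A - {x}) R = maxR A R"
proof -
  obtain m where m: "m \<in> maxR A R" using maxR_ne assms by auto
  have "m \<in> A - {x}" using m maxR_sub assms by auto
  then have "maxR (A - {x}) R = maxR A R \<inter> (A - {x})"
    using maxR_restrict[of "A - {x}" A m] m by auto
  also have "\<dots> = maxR A R" using assms maxR_sub by auto
  finally show ?thesis using \<open>m \<in> A - {x}\<close> assms by (auto simp: menu_def)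
qed

lemma remove_M:
  assumes "menu X A" "x \<in> maxR A R" "w \<in> maxR A R" "w \<noteq> x"
  shows "menu X (A - {x}) \<and> maxR (A - {x}) R = maxR A R - {x}"
proof -
  have "w \<in> A - {x}" using assms maxR_sub by auto
  then have "maxR (A - {x}) R = maxR A R \<inter> (A - {x})"
    using maxR_restrict[of "A - {x}" A w] assms by auto
  also have "\<dots> = maxR A R - {x}" using maxR_sub by auto
  finally show ?thesis using \<open>w \<in> A - {x}\<close> assms by (auto simp: menu_def)
qed

lemma c_eq_if_M_eq:
  assumes "menu X A" "menu X B" "maxR A R = maxR B R"
  shows "c A = c B"
proof -
  have "c A = (if (\<exists>x. maxR B R = {x}) then maxR B R else maxR B R - {minL (maxR B R) L})"
    using rep[OF assms(1)] unfolding assms(3) .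
  then show ?thesis using rep[OF assms(2)] by simp
qed

lemma rc_sub_M:
  assumes "menu X A" shows "rc c A \<subseteq> maxR A R"
proof
  fix x assume x: "x \<in> rc c A"
  show "x \<in> maxR A R"
  proof (rule ccontr)
    assume nx: "x \<notin> maxR A R"
    have xA: "x \<in> A" using x rc_sub[of c A] by auto
    from remove_notM[OF assms xA nx] have "menu X (A - {x})" "maxR (A - {x}) R = maxR A R" by auto
    then have "c (A - {x}) = c A" using c_eq_if_M_eq assms by blast
    moreover have "A - {x} \<noteq> {}" using \<open>menu X (A - {x})\<close> by (auto simp: menu_def)
    ultimately show False using x by (auto simp: rc_def)
  qed
qed

lemma rc_small:
  assumes "menu X A" "card (maxR A R) \<le> 2"
  shows "rc c A = c A"
proof
  show "c A \<subseteq> rc c A" using c_sub_rc cc assms by blast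
  show "rc c A \<subseteq> c A"
  proof
    fix x assume x: "x \<in> rc c A"
    show "x \<in> c A"
    proof (rule ccontr)
      assume nc: "x \<notin> c A"
      have xM: "x \<in> maxR A R" using x rc_sub_M assms by auto
      from notc_in_M[OF assms(1) xM nc] have xm: "x = minL (maxR A R) L"
        and ns: "\<not>(\<exists>z. maxR A R = {z})" by auto
      have c2: "card (maxR A R) = 2" using card_ge2[OF assms(1) ns] assms(2) by auto
      then obtain a b where ab: "maxR A R = {a, b}" "a \<noteq> b" by (auto simp: card_2_iff)
      then have "\<exists>w. maxR A R = {x, w} \<and> w \<noteq> x" using xM by auto
      then obtain w where M: "maxR A R = {x, w}" "w \<noteq> x" by blast
      have "c A = maxR A R - {x}" using c_multi[OF assms(1) ns] xm[symmetric] by simp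
      then have cA: "c A = {w}" using M by auto
      from remove_M[OF assms(1) xM, of w] M have
        "menu X (A - {x})" "maxR (A - {x}) R = {w}" by auto
      then have "c (A - {x}) = {w}" using c_single by auto
      moreover have "A - {x} \<noteq> {}" using \<open>menu X (A - {x})\<close> by (auto simp: menu_def)
      ultimately show False using x cA by (auto simp: rc_def)
    qed
  qed
qed

lemma rc_big:
  assumes "menu X A" "3 \<le> card (maxR A R)"
  shows "rc c A = maxR A R"
proof
  show "rc c A \<subseteq> maxR A R" using rc_sub_M[OF assms(1)] .
  show "maxR A R \<subseteq> rc c A"
  proof
    fix x assume xM: "x \<in> maxR A R"
    show "x \<in> rc c A"
    proof (cases "x \<in> c A")
      case True then show ?thesis using c_sub_rc cc assms by blast
    next
      case False
      let ?M = "maxR A R"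
      from notc_in_M[OF assms(1) xM False] have xm: "x = minL ?M L"
        and ns: "\<not>(\<exists>z. ?M = {z})" by auto
      have cA: "c A = ?M - {x}" using c_multi[OF assms(1) ns] xm[symmetric] by simp
      have "card (?M - {x}) = card ?M - 1" using xM M_fin[OF assms(1)] by simp
      then have "card (?M - {x}) \<ge> 2" using assms(2) by linarith
      then have "?M - {x} \<noteq> {}" by (metis card.empty not_numeral_le_zero)
      then obtain w where w: "w \<in> ?M" "w \<noteq> x" by blast
      from remove_M[OF assms(1) xM w] have m': "menu X (A - {x})" "maxR (A - {x}) R = ?M - {x}" by auto
      have ns': "\<not>(\<exists>z. ?M - {x} = {z})"
      proof
        assume "\<exists>z. ?M - {x} = {z}"
        then obtain z where "?M - {x} = {z}" by blast
        then have "card (?M - {x}) = 1" by simp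
        then show False using \<open>card (?M - {x}) \<ge> 2\<close> by simp
      qed
      have cA': "c (A - {x}) = (?M - {x}) - {minL (?M - {x}) L}"
        using c_multi[OF m'(1)] m'(2) ns' by auto
      have "finite (?M - {x})" using M_fin[OF assms(1)] by simp
      moreover have "?M - {x} \<subseteq> X" using M_X[OF assms(1)] by blast
      ultimately have "minL (?M - {x}) L \<in> ?M - {x}"
        using minL_prop[of "?M - {x}"] \<open>?M - {x} \<noteq> {}\<close> by blast
      then have "c (A - {x}) \<noteq> c A" using cA cA' by auto
      moreover have "x \<in> A" using xM maxR_sub[of A] by blast
      ultimately show ?thesis by (auto simp: rc_def)
    qed
  qed
qed

lemma rc_cases: "menu X A \<Longrightarrow> rc c A = c A \<or> (3 \<le> card (maxR A R) \<and> rc c A = maxR A R)"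
proof (cases "card (maxR A R) \<le> 2")
  case True
  assume "menu X A"
  then show ?thesis using rc_small[OF _ True] by simp
next
  case False
  assume "menu X A"
  moreover have "3 \<le> card (maxR A R)" using False by simp
  ultimately show ?thesis using rc_big by simp
qed

lemma cond1:
  assumes "menu X A" "menu X B" "A \<subset> B" "x \<in> A" "y \<in> A" "x \<in> c A" "y \<in> c B"
  shows "x \<in> c B"
proof (rule ccontr)
  assume nx: "x \<notin> c B"
  have yMB: "y \<in> maxR B R" using c_sub_M assms by auto
  have MA: "maxR A R = maxR B R \<inter> A" using maxR_restrict[of A B y] assms yMB by auto
  have xMA: "x \<in> maxR A R" using c_sub_M assms by auto
  then have xMB: "x \<in> maxR B R" using MA by auto
  from notc_in_M[OF assms(2) xMB nx] have xm: "x = minL (maxR B R) L"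
    and ns: "\<not>(\<exists>z. maxR B R = {z})" by auto
  have "y \<noteq> x" using assms nx by auto
  show False
  proof (cases "\<exists>z. maxR A R = {z}")
    case True
    have "y \<in> maxR A R" using MA yMB assms(5) by blast
    then show False using True xMA \<open>y \<noteq> x\<close> by auto
  next
    case False
    have cA: "c A = maxR A R - {minL (maxR A R) L}" using c_multi[OF assms(1) False] .
    have mp: "minL (maxR A R) L \<in> maxR A R \<and> (\<forall>z\<in>maxR A R. (z, minL (maxR A R) L) \<in> L)"
      using minLM[OF assms(1)] by blast
    have mpB: "\<forall>z\<in>maxR B R. (z, x) \<in> L"
      using xm minLM[OF assms(2)] by simp
    have "minL (maxR A R) L \<in> maxR B R" using mp MA by auto
    then have "(minL (maxR A R) L, x) \<in> L" using mpB by auto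
    moreover have "(x, minL (maxR A R) L) \<in> L" using mp xMA by auto
    ultimately have "x = minL (maxR A R) L" using L_anti by blast
    then show False using cA assms(6) by auto
  qed
qed

lemma cond2:
  assumes "menu X A" "menu X B" "A \<subset> B" "x \<in> A" "y \<in> A" "x \<in> rc c A" "y \<in> rc c B"
  shows "x \<in> rc c B"
proof -
  have yMB: "y \<in> maxR B R" using rc_sub_M assms by auto
  have MA: "maxR A R = maxR B R \<inter> A" using maxR_restrict[of A B y] assms yMB by auto
  have xMA: "x \<in> maxR A R" using rc_sub_M assms by auto
  show ?thesis
  proof (cases "3 \<le> card (maxR B R)")
    case True then show ?thesis using rc_big assms MA xMA by auto
  next
    case False
    then have rB: "rc c B = c B" using rc_small assms by auto
    have "card (maxR A R) \<le> card (maxR B R)" using MA M_fin[OF assms(2)]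
      by (simp add: card_mono)
    then have rA: "rc c A = c A" using rc_small assms False by auto
    show ?thesis using cond1[OF assms(1-5)] assms(6,7) rA rB by auto
  qed
qed

lemma cond3:
  assumes "menu X A" "2 \<le> card A"
  shows "\<exists>x\<in>A. x \<notin> c A"
proof (cases "\<exists>z. maxR A R = {z}")
  case True
  then obtain z where z: "maxR A R = {z}" by auto
  have "A \<noteq> {z}" using assms by auto
  then obtain x where "x \<in> A" "x \<noteq> z" using z maxR_sub by blast
  then show ?thesis using c_single[OF assms(1) z] by auto
next
  case False
  have "minL (maxR A R) L \<in> maxR A R"
    using minLM[OF assms(1)] by blast
  then show ?thesis using c_multi[OF assms(1) False] maxR_sub by blast
qed

lemma cond4:
  assumes "menu X A" "y \<in> X" "x \<in> A" "x \<notin> c A" "x \<in> c (A \<union> {y})"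
  shows "y \<notin> c (A \<union> {y})"
proof
  assume yc: "y \<in> c (A \<union> {y})"
  have yA: "y \<notin> A"
  proof
    assume "y \<in> A"
    then have "A \<union> {y} = A" by blast
    then show False using assms(4,5) by simp
  qed
  have mB: "menu X (A \<union> {y})" using assms(1,2) by (auto simp: menu_def)
  let ?B = "A \<union> {y}"
  have xMB: "x \<in> maxR ?B R" using c_sub_M[OF mB] assms(5) by blast
  have yMB: "y \<in> maxR ?B R" using c_sub_M[OF mB] yc by blast
  have MA: "maxR A R = maxR ?B R \<inter> A" using maxR_restrict[OF Un_upper1 assms(3) xMB] .
  have xMA: "x \<in> maxR A R" using MA xMB assms(3) by blast
  from notc_in_M[OF assms(1) xMA assms(4)] have xm: "minL (maxR A R) L = x" by simp
  have "x \<noteq> y" using yA assms(3) by blast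
  have nsB: "\<not>(\<exists>z. maxR ?B R = {z})"
  proof
    assume "\<exists>z. maxR ?B R = {z}"
    then obtain z where "maxR ?B R = {z}" by blast
    then have "x = z" "y = z" using xMB yMB by simp_all
    then show False using \<open>x \<noteq> y\<close> by simp
  qed
  have cB: "c ?B = maxR ?B R - {minL (maxR ?B R) L}" using c_multi[OF mB nsB] .
  have mpB: "minL (maxR ?B R) L \<in> maxR ?B R \<and> (\<forall>z\<in>maxR ?B R. (z, minL (maxR ?B R) L) \<in> L)"
    using minLM[OF mB] by blast
  have mpA: "\<forall>z\<in>maxR A R. (z, x) \<in> L"
    using minLM[OF assms(1)] unfolding xm by blast
  let ?m = "minL (maxR ?B R) L"
  have "?m \<noteq> x" using cB assms(5) by (metis DiffD2 singletonI)
  have "?m \<noteq> y" using cB yc by (metis DiffD2 singletonI)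
  have "?m \<in> maxR ?B R" using mpB by simp
  then have "?m \<in> A" using maxR_sub[of ?B] \<open>?m \<noteq> y\<close> by blast
  then have "?m \<in> maxR A R" using MA \<open>?m \<in> maxR ?B R\<close> by simp
  then have "(?m, x) \<in> L" using mpA by blast
  moreover have "(x, ?m) \<in> L" using mpB xMB by blast
  ultimately have "?m = x" by (rule L_anti)
  then show False using \<open>?m \<noteq> x\<close> by simp
qed

lemma cond5:
  assumes "menu X A" "menu X B" "B \<subseteq> rc c A" "2 \<le> card B"
  shows "\<exists>x\<in>B. x \<notin> c B \<and> B = c B \<union> {x}"
proof -
  from rc_cases[OF assms(1)] show ?thesis
  proof
    assume r: "rc c A = c A"
    have "card (c A) \<le> 1"
    proof (cases "\<exists>z. maxR A R = {z}")
      case True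
      then obtain z where "maxR A R = {z}" by blast
      then show ?thesis using c_single[OF assms(1)] by simp
    next
      case False
      have "card (maxR A R) \<le> 2"
      proof (rule ccontr)
        assume "\<not> card (maxR A R) \<le> 2"
        then have "3 \<le> card (maxR A R)" by simp
        then have "rc c A = maxR A R" using rc_big[OF assms(1)] by simp
        then have "c A = maxR A R" using r by simp
        moreover have "minL (maxR A R) L \<in> maxR A R" using minLM[OF assms(1)] by blast
        ultimately show False using c_multi[OF assms(1) False] by blast
      qed
      moreover have "card (c A) = card (maxR A R) - 1"
        using c_multi[OF assms(1) False] M_fin[OF assms(1)] minLM[OF assms(1)] by simp
      ultimately show ?thesis by linarith
    qed
    moreover have "finite (c A)" using M_fin[OF assms(1)] c_sub_M[OF assms(1)] finite_subset by blast
    moreover have "card B \<le> card (c A)" using card_mono[OF calculation(2)] assms(3) r by simp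
    ultimately have False using assms(4) by linarith
    then show ?thesis ..
  next
    assume r: "3 \<le> card (maxR A R) \<and> rc c A = maxR A R"
    then have BM: "B \<subseteq> maxR A R" using assms(3) by simp
    have MB: "maxR B R = B" using BM by (auto simp: maxR_def)
    have finB: "finite B" using assms(2) fin by (auto simp: menu_def intro: finite_subset)
    have ns: "\<not>(\<exists>z. maxR B R = {z})"
    proof
      assume "\<exists>z. maxR B R = {z}"
      then obtain z where "B = {z}" using MB by auto
      then show False using assms(4) by simp
    qed
    have cB: "c B = B - {minL B L}" using c_multi[OF assms(2) ns] MB by simp
    have "B \<noteq> {}" "B \<subseteq> X" using assms(2) by (auto simp: menu_def)
    then have "minL B L \<in> B" using minL_prop[OF finB] by blast
    then show ?thesis using cB by auto
  qed
qed

end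

section \<open>Sufficiency\<close>

locale suf_ctx =
  fixes X :: "'a set" and c :: "'a set \<Rightarrow> 'a set"
  assumes fin: "finite X" and cc: "choice_corr X c"
    and C1: "\<And>x y A B. menu X A \<Longrightarrow> menu X B \<Longrightarrow> A \<subset> B \<Longrightarrow> x \<in> A \<Longrightarrow> y \<in> A
              \<Longrightarrow> x \<in> c A \<Longrightarrow> y \<in> c B \<Longrightarrow> x \<in> c B"
    and C2: "\<And>x y A B. menu X A \<Longrightarrow> menu X B \<Longrightarrow> A \<subset> B \<Longrightarrow> x \<in> A \<Longrightarrow> y \<in> A
              \<Longrightarrow> x \<in> rc c A \<Longrightarrow> y \<in> rc c B \<Longrightarrow> x \<in> rc c B"
    and C3: "\<And>A. menu X A \<Longrightarrow> 2 \<le> card A \<Longrightarrow> \<exists>x\<in>A. x \<notin> c A"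
    and C5: "\<And>A B. menu X A \<Longrightarrow> menu X B \<Longrightarrow> B \<subseteq> rc c A \<Longrightarrow> 2 \<le> card B
              \<Longrightarrow> \<exists>x\<in>B. x \<notin> c B \<and> B = c B \<union> {x}"
begin

definition Lc :: "'a rel" where
  "Lc = {(x,y). x \<in> X \<and> y \<in> X \<and> x \<in> c {x,y}}"

definition Rc :: "'a rel" where
  "Rc = {(x,y). x \<in> X \<and> y \<in> X \<and> (\<exists>B. menu X B \<and> y \<in> B \<and> x \<in> rc c B)}"

lemma cA: "menu X A \<Longrightarrow> c A \<subseteq> A" using cc by (simp add: choice_corr_def)
lemma cne: "menu X A \<Longrightarrow> c A \<noteq> {}" using cc by (simp add: choice_corr_def)

lemma menu_pair: "x \<in> X \<Longrightarrow> y \<in> X \<Longrightarrow> menu X {x,y}" by (simp add: menu_def)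
lemma menu_single: "x \<in> X \<Longrightarrow> menu X {x}" by (simp add: menu_def)

lemma single: "x \<in> X \<Longrightarrow> c {x} = {x}"
  using cA[OF menu_single] cne[OF menu_single] by blast

lemma pair:
  assumes "x \<in> X" "y \<in> X" "x \<noteq> y"
  shows "c {x,y} = {x} \<or> c {x,y} = {y}"
proof -
  have m: "menu X {x,y}" using menu_pair assms by simp
  have "card {x,y} = 2" using assms(3) by simp
  then obtain z where z: "z \<in> {x,y}" "z \<notin> c {x,y}" using C3[OF m] by auto
  have s: "c {x,y} \<subseteq> {x,y}" "c {x,y} \<noteq> {}" using cA[OF m] cne[OF m] by auto
  show ?thesis
  proof (cases "z = x")
    case True
    then have "c {x,y} \<subseteq> {y}" using s z by blast
    then show ?thesis using s(2) by blast
  next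
    case False
    then have "z = y" using z by blast
    then have "c {x,y} \<subseteq> {x}" using s z by blast
    then show ?thesis using s(2) by blast
  qed
qed

lemma pair_sym: "c {y,x} = c {x,y}" by (simp add: insert_commute)

lemma Lc_tot: "x \<in> X \<Longrightarrow> y \<in> X \<Longrightarrow> (x,y) \<in> Lc \<or> (y,x) \<in> Lc"
proof -
  assume a: "x \<in> X" "y \<in> X"
  show ?thesis
  proof (cases "x = y")
    case True then show ?thesis using single a by (simp add: Lc_def)
  next
    case False
    from pair[OF a False] show ?thesis using a by (auto simp: Lc_def pair_sym)
  qed
qed

lemma Lc_anti: "(x,y) \<in> Lc \<Longrightarrow> (y,x) \<in> Lc \<Longrightarrow> x = y"
proof (rule ccontr)
  assume a: "(x,y) \<in> Lc" "(y,x) \<in> Lc" "x \<noteq> y"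
  then have "x \<in> c {x,y}" "y \<in> c {x,y}" "x \<in> X" "y \<in> X" by (auto simp: Lc_def pair_sym)
  then show False using pair[of x y] a(3) by auto
qed

lemma Lc_trans:
  assumes "(x,y) \<in> Lc" "(y,z) \<in> Lc" shows "(x,z) \<in> Lc"
proof -
  have X: "x \<in> X" "y \<in> X" "z \<in> X" and xy: "x \<in> c {x,y}" and yz: "y \<in> c {y,z}"
    using assms by (auto simp: Lc_def)
  show ?thesis
  proof (cases "x = y \<or> y = z \<or> x = z")
    case True
    then show ?thesis
    proof (elim disjE)
      assume "x = y" then show ?thesis using assms by simp
    next
      assume "y = z" then show ?thesis using assms by simp
    next
      assume "x = z" then show ?thesis using X single by (simp add: Lc_def)
    qed
  next
    case False
    then have d: "x \<noteq> y" "y \<noteq> z" "x \<noteq> z" by auto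
    show ?thesis
    proof (rule ccontr)
      assume "(x,z) \<notin> Lc"
      then have "x \<notin> c {x,z}" using X by (simp add: Lc_def)
      then have zx: "z \<in> c {x,z}" using pair[OF X(1) X(3) d(3)] by auto
      let ?T = "{x,y,z}"
      have mT: "menu X ?T" using X by (simp add: menu_def)
      have m1: "menu X {x,y}" "menu X {y,z}" "menu X {x,z}" using X by (simp_all add: menu_def)
      have s1: "{x,y} \<subset> ?T" "{y,z} \<subset> ?T" "{x,z} \<subset> ?T" using d by auto
      have i1: "y \<in> c ?T \<Longrightarrow> x \<in> c ?T" using C1[of "{x,y}" ?T x y] m1(1) mT s1(1) xy by blast
      have i2: "z \<in> c ?T \<Longrightarrow> y \<in> c ?T" using C1[of "{y,z}" ?T y z] m1(2) mT s1(2) yz by blast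
      have i3: "x \<in> c ?T \<Longrightarrow> z \<in> c ?T" using C1[of "{x,z}" ?T z x] m1(3) mT s1(3) zx by blast
      have "c ?T \<subseteq> ?T" "c ?T \<noteq> {}" using cA[OF mT] cne[OF mT] by auto
      then have "c ?T = ?T" using i1 i2 i3 by blast
      moreover have "card ?T = 3" using d by simp
      ultimately show False using C3[OF mT] by auto
    qed
  qed
qed

lemma Lc_lin: "lin_order_on X Lc"
  unfolding lin_order_on_def weak_order_on_def preorder_on_def
proof (intro conjI)
  show "Lc \<subseteq> X \<times> X" by (auto simp: Lc_def)
  show "refl_on X Lc" using single by (auto simp: refl_on_def Lc_def)
  show "trans Lc" by (rule transI) (rule Lc_trans)
  show "total_on X Lc" using Lc_tot by (auto simp: total_on_def)
  show "antisym Lc" by (rule antisymI) (rule Lc_anti)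
qed

lemma upseg:
  assumes "menu X B" "y \<in> c B" "z \<in> B" "(z,y) \<in> Lc"
  shows "z \<in> c B"
proof (cases "z = y")
  case True then show ?thesis using assms by simp
next
  case False
  have X: "z \<in> X" "y \<in> X" and zc: "z \<in> c {z,y}" using assms(4) by (auto simp: Lc_def)
  have yB: "y \<in> B" using assms(2) cA[OF assms(1)] by blast
  show ?thesis
  proof (cases "B = {z,y}")
    case True
    have "c {z,y} = {z}" using pair[OF X False] zc False by auto
    then show ?thesis using True assms(2) False by simp
  next
    case False
    then have "{z,y} \<subset> B" using assms(3) yB by blast
    then show ?thesis using C1[OF menu_pair[OF X] assms(1) _ _ _ zc assms(2)] by simp
  qed
qed

lemma c_sub_rc': "menu X A \<Longrightarrow> c A \<subseteq> rc c A" using c_sub_rc[OF cc] .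

lemma UL:
  assumes "menu X A" "menu X D" "A \<subseteq> D" "a \<in> A" "a \<in> rc c D"
  shows "rc c A \<subseteq> rc c D"
proof (cases "A = D")
  case True then show ?thesis by simp
next
  case False
  then have s: "A \<subset> D" using assms(3) by blast
  show ?thesis
  proof
    fix x assume x: "x \<in> rc c A"
    then have "x \<in> A" using rc_sub[of c A] by blast
    then show "x \<in> rc c D" using C2[OF assms(1) assms(2) s _ assms(4) x assms(5)] by simp
  qed
qed

lemma Rc_trans:
  assumes "(x,y) \<in> Rc" "(y,z) \<in> Rc" shows "(x,z) \<in> Rc"
proof -
  obtain A where A: "menu X A" "y \<in> A" "x \<in> rc c A" using assms(1) by (auto simp: Rc_def)
  obtain B where B: "menu X B" "z \<in> B" "y \<in> rc c B" using assms(2) by (auto simp: Rc_def)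
  have X: "x \<in> X" "z \<in> X" using assms by (auto simp: Rc_def)
  let ?D = "A \<union> B"
  have mD: "menu X ?D" using A(1) B(1) by (auto simp: menu_def)
  have "rc c ?D \<noteq> {}" using c_sub_rc'[OF mD] cne[OF mD] by blast
  then obtain r where r: "r \<in> rc c ?D" by blast
  then have "r \<in> ?D" using rc_sub[of c ?D] by blast
  have "x \<in> rc c ?D"
  proof (cases "r \<in> A")
    case True
    then show ?thesis using UL[OF A(1) mD _ True r] A(3) by blast
  next
    case False
    then have "r \<in> B" using \<open>r \<in> ?D\<close> by blast
    then have "y \<in> rc c ?D" using UL[OF B(1) mD _ _ r] B(3) by blast
    then show ?thesis using UL[OF A(1) mD _ A(2)] A(3) by blast
  qed
  moreover have "z \<in> ?D" using B(2) by blast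
  ultimately show ?thesis using X mD by (auto simp: Rc_def)
qed

lemma Rc_weak: "weak_order_on X Rc"
  unfolding weak_order_on_def preorder_on_def
proof (intro conjI)
  show "Rc \<subseteq> X \<times> X" by (auto simp: Rc_def)
  show "refl_on X Rc"
  proof (unfold refl_on_def, intro ballI)
    fix x assume x: "x \<in> X"
    have "x \<in> rc c {x}" by (simp add: rc_def)
    then show "(x,x) \<in> Rc" using x menu_single[OF x] by (auto simp: Rc_def)
  qed
  show "trans Rc" by (rule transI) (rule Rc_trans)
  show "total_on X Rc"
  proof (unfold total_on_def, intro ballI impI)
    fix x y assume a: "x \<in> X" "y \<in> X" "x \<noteq> y"
    have m: "menu X {x,y}" using menu_pair a by simp
    from pair[OF a] show "(x, y) \<in> Rc \<or> (y, x) \<in> Rc"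
    proof
      assume "c {x,y} = {x}"
      then have "x \<in> rc c {x,y}" using c_sub_rc'[OF m] by blast
      then show ?thesis using a m by (auto simp: Rc_def)
    next
      assume "c {x,y} = {y}"
      then have "y \<in> rc c {x,y}" using c_sub_rc'[OF m] by blast
      then show ?thesis using a m by (auto simp: Rc_def)
    qed
  qed
qed

lemma K:
  "menu X D \<Longrightarrow> 2 \<le> card (c D) \<Longrightarrow> \<exists>d\<in>rc c D. d \<notin> c D"
proof (induction "card D" arbitrary: D rule: less_induct)
  case less
  have finD: "finite D" using less.prems(1) fin by (auto simp: menu_def intro: finite_subset)
  show ?case
  proof (cases "D = c D")
    case True
    then have "2 \<le> card D" using less.prems(2) by simp
    then obtain x where "x \<in> D" "x \<notin> c D" using C3[OF less.prems(1)] by blast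
    then show ?thesis using True by blast
  next
    case False
    then obtain e where e: "e \<in> D" "e \<notin> c D" using cA[OF less.prems(1)] by blast
    let ?D' = "D - {e}"
    have sub: "c D \<subseteq> ?D'" using cA[OF less.prems(1)] e(2) by blast
    have mD': "menu X ?D'" using sub cne[OF less.prems(1)] less.prems(1) by (auto simp: menu_def)
    show ?thesis
    proof (cases "c ?D' = c D")
      case False
      then have "e \<in> rc c D" using e(1) by (simp add: rc_def)
      then show ?thesis using e(2) by blast
    next
      case True
      have "card ?D' < card D" using card_Diff1_less[OF finD e(1)] .
      moreover have "2 \<le> card (c ?D')" using True less.prems(2) by simp
      ultimately obtain d where d: "d \<in> rc c ?D'" "d \<notin> c ?D'" using less.hyps[OF _ mD'] by blast
      have "d \<in> ?D'" using d(1) rc_sub[of c ?D'] by blast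
      obtain y where y: "y \<in> c D" using cne[OF less.prems(1)] by blast
      have yD': "y \<in> ?D'" using y sub by blast
      have yr: "y \<in> rc c D" using y c_sub_rc'[OF less.prems(1)] by blast
      have s: "?D' \<subset> D" using e(1) by blast
      have "d \<in> rc c D" using C2[OF mD' less.prems(1) s \<open>d \<in> ?D'\<close> yD' d(1) yr] .
      then show ?thesis using d(2) True by blast
    qed
  qed
qed

lemma clique:
  assumes W: "W \<subseteq> X" "x0 \<in> W" "y0 \<in> W" "x0 \<noteq> y0"
    and allR: "\<forall>x\<in>W. \<forall>y\<in>W. (x,y) \<in> Rc"
  shows "\<exists>D. menu X D \<and> W \<subseteq> rc c D"
proof -
  let ?BB = "{B. menu X B \<and> (\<exists>x\<in>W. \<exists>y\<in>W. x \<noteq> y \<and> y \<in> B \<and> x \<in> rc c B)}"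
  let ?D = "\<Union>?BB"
  have wit: "\<And>x y. x \<in> W \<Longrightarrow> y \<in> W \<Longrightarrow> x \<noteq> y \<Longrightarrow> \<exists>B. B \<in> ?BB \<and> y \<in> B \<and> x \<in> rc c B"
  proof -
    fix x y assume a: "x \<in> W" "y \<in> W" "x \<noteq> y"
    then have "(x,y) \<in> Rc" using allR by blast
    then obtain B where "menu X B" "y \<in> B" "x \<in> rc c B" by (auto simp: Rc_def)
    then show "\<exists>B. B \<in> ?BB \<and> y \<in> B \<and> x \<in> rc c B" using a by blast
  qed
  have DX: "?D \<subseteq> X" by (auto simp: menu_def)
  obtain B0 where "B0 \<in> ?BB" "y0 \<in> B0" using wit[OF W(2) W(3) W(4)] by blast
  then have "?D \<noteq> {}" by blast
  then have mD: "menu X ?D" using DX by (simp add: menu_def)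
  have "rc c ?D \<noteq> {}" using c_sub_rc'[OF mD] cne[OF mD] by blast
  then obtain r where r: "r \<in> rc c ?D" by blast
  then have "r \<in> ?D" using rc_sub[of c ?D] by blast
  then obtain B1 where B1: "B1 \<in> ?BB" "r \<in> B1" by blast
  then obtain xi where xi: "xi \<in> W" "xi \<in> rc c B1" by blast
  have mB1: "menu X B1" using B1 by blast
  have "rc c B1 \<subseteq> rc c ?D" using UL[OF mB1 mD _ B1(2) r] B1(1) by blast
  then have xiD: "xi \<in> rc c ?D" using xi by blast
  have "W \<subseteq> rc c ?D"
  proof
    fix k assume k: "k \<in> W"
    show "k \<in> rc c ?D"
    proof (cases "k = xi")
      case True then show ?thesis using xiD by simp
    next
      case False
      then obtain B where B: "B \<in> ?BB" "xi \<in> B" "k \<in> rc c B" using wit[OF k xi(1)] by blast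
      have mB: "menu X B" using B(1) by blast
      have "rc c B \<subseteq> rc c ?D" using UL[OF mB mD _ B(2) xiD] B(1) by blast
      then show ?thesis using B(3) by blast
    qed
  qed
  then show ?thesis using mD by blast
qed

lemma Lc_min:
  assumes "x \<in> S" "\<forall>y\<in>S. (y,x) \<in> Lc"
  shows "minL S Lc = x"
  unfolding minL_def
proof (rule the_equality)
  show "x \<in> S \<and> (\<forall>y\<in>S. (y, x) \<in> Lc)" using assms by blast
  fix x' assume "x' \<in> S \<and> (\<forall>y\<in>S. (y, x') \<in> Lc)"
  then have "(x, x') \<in> Lc" "(x', x) \<in> Lc" using assms by blast+
  then show "x' = x" using Lc_anti by blast
qed

lemma main:
  assumes mA: "menu X A"
  shows "c A = (if (\<exists>x. maxR A Rc = {x}) then maxR A Rc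
                  else maxR A Rc - {minL (maxR A Rc) Lc})"
proof -
  let ?M = "maxR A Rc"
  have AX: "A \<subseteq> X" using mA by (simp add: menu_def)
  have rcM: "rc c A \<subseteq> ?M"
  proof
    fix x assume x: "x \<in> rc c A"
    then have xA: "x \<in> A" using rc_sub[of c A] by blast
    have "\<forall>y\<in>A. (x,y) \<in> Rc" using x xA AX mA by (auto simp: Rc_def)
    then show "x \<in> ?M" using xA by (simp add: maxR_def)
  qed
  have cM: "c A \<subseteq> ?M" using rcM c_sub_rc'[OF mA] by blast
  have MA: "?M \<subseteq> A" by (auto simp: maxR_def)
  show ?thesis
  proof (cases "\<exists>x. ?M = {x}")
    case True
    then obtain z where z: "?M = {z}" by blast
    then have "c A \<subseteq> {z}" using cM by simp
    then have "c A = {z}" using cne[OF mA] subset_singletonD by blast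
    then show ?thesis using z by simp
  next
    case False
    have "?M \<noteq> {}" using cM cne[OF mA] by blast
    then obtain x0 where x0: "x0 \<in> ?M" by blast
    then obtain y0 where y0: "y0 \<in> ?M" "y0 \<noteq> x0" using False by blast
    have MX: "?M \<subseteq> X" using MA AX by blast
    have allR: "\<forall>x\<in>?M. \<forall>y\<in>?M. (x,y) \<in> Rc" by (auto simp: maxR_def)
    obtain D where D: "menu X D" "?M \<subseteq> rc c D" using clique[OF MX x0 y0(1) y0(2)[symmetric] allR] by blast
    have finM: "finite ?M" using MX fin finite_subset by blast
    have "{x0,y0} \<subseteq> ?M" using x0 y0 by blast
    then have "card {x0,y0} \<le> card ?M" using finM card_mono by blast
    then have c2: "2 \<le> card ?M" using y0(2) by simp
    have mM: "menu X ?M" using MX \<open>?M \<noteq> {}\<close> by (simp add: menu_def)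
    obtain x where x: "x \<in> ?M" "x \<notin> c ?M" "?M = c ?M \<union> {x}" using C5[OF D(1) mM D(2) c2] by blast
    have xmin: "minL ?M Lc = x"
    proof (rule Lc_min[OF x(1)], intro ballI)
      fix y assume y: "y \<in> ?M"
      show "(y,x) \<in> Lc"
      proof (cases "y = x")
        case True then show ?thesis using x(1) MX single by (auto simp: Lc_def)
      next
        case False
        then have yc: "y \<in> c ?M" using y x(3) by blast
        have "(x,y) \<notin> Lc"
        proof
          assume "(x,y) \<in> Lc"
          then have "x \<in> c ?M" using upseg[OF mM yc x(1)] by blast
          then show False using x(2) by blast
        qed
        then show ?thesis using Lc_tot[of x y] x(1) y MX by blast
      qed
    qed
    have cMA: "c ?M \<subseteq> c A"
    proof (cases "?M = A")
      case True then show ?thesis by simp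
    next
      case False
      then have s: "?M \<subset> A" using MA by blast
      obtain w where w: "w \<in> c A" using cne[OF mA] by blast
      then have wM: "w \<in> ?M" using cM by blast
      show ?thesis
      proof
        fix z assume z: "z \<in> c ?M"
        then have "z \<in> ?M" using cA[OF mM] by blast
        then show "z \<in> c A" using C1[OF mM mA s _ wM z w] by blast
      qed
    qed
    have xnc: "x \<notin> c A"
    proof
      assume xc: "x \<in> c A"
      then have eq: "c A = ?M" using cM cMA x(3) by blast
      then have "2 \<le> card (c A)" using c2 by simp
      then obtain d where "d \<in> rc c A" "d \<notin> c A" using K[OF mA] by blast
      then show False using rcM eq by blast
    qed
    have "c A = ?M - {x}" using cM cMA x(3) xnc by blast
    then show ?thesis using False xmin by simp
  qed
qed

end

theorem theorem1:
  fixes X :: "'a set" and c :: "'a set \<Rightarrow> 'a set"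
  assumes "finite X" and "choice_corr X c"
  shows "min_compromise_rep X c \<longleftrightarrow>
    ((\<forall>x y A B. menu X A \<and> menu X B \<and> A \<subset> B \<and> x \<in> A \<and> y \<in> A
        \<and> x \<in> c A \<and> y \<in> c B \<longrightarrow> x \<in> c B)
   \<and> (\<forall>x y A B. menu X A \<and> menu X B \<and> A \<subset> B \<and> x \<in> A \<and> y \<in> A
        \<and> x \<in> rc c A \<and> y \<in> rc c B \<longrightarrow> x \<in> rc c B)
   \<and> (\<forall>A. menu X A \<and> card A \<ge> 2 \<longrightarrow> (\<exists>x \<in> A. x \<notin> c A))
   \<and> (\<forall>A x y. menu X A \<and> x \<in> X \<and> y \<in> X \<and> x \<in> A - c A \<and> x \<in> c (A \<union> {y})
        \<longrightarrow> y \<notin> c (A \<union> {y}))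
   \<and> (\<forall>A B. menu X A \<and> menu X B \<and> B \<subseteq> rc c A \<and> card B \<ge> 2
        \<longrightarrow> (\<exists>x \<in> B. x \<notin> c B \<and> B = c B \<union> {x})))"
proof
  assume "min_compromise_rep X c"
  then obtain R L where RL: "weak_order_on X R" "lin_order_on X L"
    "\<forall>A. menu X A \<longrightarrow> c A = (if (\<exists>x. maxR A R = {x}) then maxR A R
                  else maxR A R - {minL (maxR A R) L})"
    unfolding min_compromise_rep_def by blast
  interpret r: rep_ctx X c R L
    by (rule rep_ctx.intro) (use assms RL in blast)+
  show "(\<forall>x y A B. menu X A \<and> menu X B \<and> A \<subset> B \<and> x \<in> A \<and> y \<in> A
        \<and> x \<in> c A \<and> y \<in> c B \<longrightarrow> x \<in> c B)
   \<and> (\<forall>x y A B. menu X A \<and> menu X B \<and> A \<subset> B \<and> x \<in> A \<and> y \<in> A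
        \<and> x \<in> rc c A \<and> y \<in> rc c B \<longrightarrow> x \<in> rc c B)
   \<and> (\<forall>A. menu X A \<and> card A \<ge> 2 \<longrightarrow> (\<exists>x \<in> A. x \<notin> c A))
   \<and> (\<forall>A x y. menu X A \<and> x \<in> X \<and> y \<in> X \<and> x \<in> A - c A \<and> x \<in> c (A \<union> {y})
        \<longrightarrow> y \<notin> c (A \<union> {y}))
   \<and> (\<forall>A B. menu X A \<and> menu X B \<and> B \<subseteq> rc c A \<and> card B \<ge> 2
        \<longrightarrow> (\<exists>x \<in> B. x \<notin> c B \<and> B = c B \<union> {x}))"
  proof (intro conjI allI impI)
    fix x y A B
    assume h: "menu X A \<and> menu X B \<and> A \<subset> B \<and> x \<in> A \<and> y \<in> A \<and> x \<in> c A \<and> y \<in> c B"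
    then show "x \<in> c B" using r.cond1[of A B x y] by blast
  next
    fix x y A B
    assume h: "menu X A \<and> menu X B \<and> A \<subset> B \<and> x \<in> A \<and> y \<in> A \<and> x \<in> rc c A \<and> y \<in> rc c B"
    then show "x \<in> rc c B" using r.cond2[of A B x y] by blast
  next
    fix A assume h: "menu X A \<and> 2 \<le> card A"
    then show "\<exists>x\<in>A. x \<notin> c A" using r.cond3[of A] by blast
  next
    fix A x y
    assume h: "menu X A \<and> x \<in> X \<and> y \<in> X \<and> x \<in> A - c A \<and> x \<in> c (A \<union> {y})"
    then show "y \<notin> c (A \<union> {y})" using r.cond4[of A y x] by blast
  next
    fix A B assume h: "menu X A \<and> menu X B \<and> B \<subseteq> rc c A \<and> 2 \<le> card B"
    then show "\<exists>x\<in>B. x \<notin> c B \<and> B = c B \<union> {x}" using r.cond5[of A B] by blast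
  qed
next
  assume h: "(\<forall>x y A B. menu X A \<and> menu X B \<and> A \<subset> B \<and> x \<in> A \<and> y \<in> A
        \<and> x \<in> c A \<and> y \<in> c B \<longrightarrow> x \<in> c B)
   \<and> (\<forall>x y A B. menu X A \<and> menu X B \<and> A \<subset> B \<and> x \<in> A \<and> y \<in> A
        \<and> x \<in> rc c A \<and> y \<in> rc c B \<longrightarrow> x \<in> rc c B)
   \<and> (\<forall>A. menu X A \<and> card A \<ge> 2 \<longrightarrow> (\<exists>x \<in> A. x \<notin> c A))
   \<and> (\<forall>A x y. menu X A \<and> x \<in> X \<and> y \<in> X \<and> x \<in> A - c A \<and> x \<in> c (A \<union> {y})
        \<longrightarrow> y \<notin> c (A \<union> {y}))
   \<and> (\<forall>A B. menu X A \<and> menu X B \<and> B \<subseteq> rc c A \<and> card B \<ge> 2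
        \<longrightarrow> (\<exists>x \<in> B. x \<notin> c B \<and> B = c B \<union> {x}))"
  have h1: "\<And>x y A B. menu X A \<Longrightarrow> menu X B \<Longrightarrow> A \<subset> B \<Longrightarrow> x \<in> A \<Longrightarrow> y \<in> A
              \<Longrightarrow> x \<in> c A \<Longrightarrow> y \<in> c B \<Longrightarrow> x \<in> c B"
    using h by blast
  have h2: "\<And>x y A B. menu X A \<Longrightarrow> menu X B \<Longrightarrow> A \<subset> B \<Longrightarrow> x \<in> A \<Longrightarrow> y \<in> A
              \<Longrightarrow> x \<in> rc c A \<Longrightarrow> y \<in> rc c B \<Longrightarrow> x \<in> rc c B"
    using h by blast
  have h3: "\<And>A. menu X A \<Longrightarrow> 2 \<le> card A \<Longrightarrow> \<exists>x\<in>A. x \<notin> c A"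
    using h by blast
  have h5: "\<And>A B. menu X A \<Longrightarrow> menu X B \<Longrightarrow> B \<subseteq> rc c A \<Longrightarrow> 2 \<le> card B
              \<Longrightarrow> \<exists>x\<in>B. x \<notin> c B \<and> B = c B \<union> {x}"
    using h by blast
  interpret s: suf_ctx X c
    by (rule suf_ctx.intro[OF assms h1 h2 h3 h5])
  show "min_compromise_rep X c"
    unfolding min_compromise_rep_def
    using s.Rc_weak s.Lc_lin s.main by blast
qed

end
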